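(* Let $\lambda$ be a singular cardinal of cofinality $\kappa$ and $\vec\lambda=\langle\lambda_i:i<\kappa\rangle$ a strictly increasing sequence of regular cardinals converging to $\lambda$. Then $\mathbb G(\vec\lambda)$ is $(\lambda+1)$-strategically closed.
   Context: For $f,g:\kappa\to\mathrm{ON}$, $f<^*g$ means there is $j<\kappa$ with $f(i)<g(i)$ for all $i\ge j$. Given a $<^*$-increasing sequence $\langle f_\gamma:\gamma<\beta\rangle$ in $\prod_{i<\kappa}\lambda_i$, $\beta$ is a good point if there are an unbounded $A\subseteq\beta$ of order type $\mathrm{cf}(\beta)$ and $j<\kappa$ such that for all $i\ge j$, $\langle f_\gamma(i):\gamma\in A\rangle$ is strictly increasing. $\mathbb G(\vec\lambda)$ consists of sequences $\langle f_\beta:\beta\le\alpha\rangle$ with $\alpha<\lambda^+$ such that for all $\beta\le\alpha$: $f_\beta\in\prod_{i<\kappa}\lambda_i$; $f_\gamma<^*f_\beta$ for all $\gamma<\beta$; and if $\mathrm{cf}(\beta)>\kappa$ then $\beta$ is a good point of $\langle f_\gamma:\gamma<\beta\rangle$. Order is end-extension. A poset is $(\lambda+1)$-strategically closed if in the game of length $\lambda+1$ in which two players alternately choose a decreasing sequence of conditions $\langle p_\xi:\xi\le\lambda\rangle$, with Player II choosing at even stages (including all limit stages and stage $0$), Player II has a strategy guaranteeing that she can make a legal move at every stage $\xi\le\lambda$. *)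

theory Defs
  imports Main "HOL-Library.Equipollence"
begin

text \<open>Ordinals are modelled as elements of an arbitrary well-ordered type 'o;
  the ordinal represented by a is the order type of the initial segment below a.\<close>

definition is_cardinal :: "'o::wellorder \<Rightarrow> bool" where
  "is_cardinal a \<longleftrightarrow> (\<forall>b<a. \<not> ({..<b} \<approx> {..<a}))"

definition cofinal_in :: "'o::wellorder set \<Rightarrow> 'o \<Rightarrow> bool" where
  "cofinal_in A b \<longleftrightarrow> A \<subseteq> {..<b} \<and> (\<forall>x<b. \<exists>a\<in>A. x \<le> a)"

definition cof :: "'o::wellorder \<Rightarrow> 'o" where
  "cof b = (LEAST g. \<exists>A. cofinal_in A b \<and> A \<approx> {..<g})"

definition regular_card :: "'o::wellorder \<Rightarrow> bool" where
  "regular_card a \<longleftrightarrow> is_cardinal a \<and> infinite {..<a} \<and> cof a = a"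

definition singular_card :: "'o::wellorder \<Rightarrow> bool" where
  "singular_card a \<longleftrightarrow> is_cardinal a \<and> infinite {..<a} \<and> cof a < a"

definition has_otype :: "'o::wellorder set \<Rightarrow> 'o \<Rightarrow> bool" where
  "has_otype A g \<longleftrightarrow> (\<exists>h. bij_betw h {..<g} A \<and> strict_mono_on {..<g} h)"

definition eventually_less :: "'o::wellorder \<Rightarrow> ('o \<Rightarrow> 'o) \<Rightarrow> ('o \<Rightarrow> 'o) \<Rightarrow> bool" where
  "eventually_less \<kappa> f g \<longleftrightarrow> (\<exists>j<\<kappa>. \<forall>i. j \<le> i \<and> i < \<kappa> \<longrightarrow> f i < g i)"

definition good_point :: "'o::wellorder \<Rightarrow> ('o \<Rightarrow> 'o \<Rightarrow> 'o) \<Rightarrow> 'o \<Rightarrow> bool" where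
  "good_point \<kappa> F b \<longleftrightarrow> (\<exists>A. cofinal_in A b \<and> has_otype A (cof b) \<and>
     (\<exists>j<\<kappa>. \<forall>i. j \<le> i \<and> i < \<kappa> \<longrightarrow> strict_mono_on A (\<lambda>g. F g i)))"

text \<open>A condition is a pair (alpha, F) standing for the sequence F beta (beta \<le> alpha);
  alpha < lambda^+ is expressed as |alpha| \<le> lambda.\<close>
type_synonym 'o cond = "'o \<times> ('o \<Rightarrow> 'o \<Rightarrow> 'o)"

definition G_set :: "'o::wellorder \<Rightarrow> 'o \<Rightarrow> ('o \<Rightarrow> 'o) \<Rightarrow> 'o cond set" where
  "G_set lam \<kappa> ls = {(\<alpha>, F). {..<\<alpha>} \<lesssim> {..<lam} \<and>
      (\<forall>b\<le>\<alpha>. (\<forall>i<\<kappa>. F b i < ls i) \<and>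
               (\<forall>g<b. eventually_less \<kappa> (F g) (F b)) \<and>
               (\<kappa> < cof b \<longrightarrow> good_point \<kappa> F b))}"

text \<open>G_ext \<kappa> q p: q end-extends p (q is stronger)\<close>
definition G_ext :: "'o::wellorder \<Rightarrow> 'o cond \<Rightarrow> 'o cond \<Rightarrow> bool" where
  "G_ext \<kappa> q p \<longleftrightarrow> fst p \<le> fst q \<and> (\<forall>b\<le>fst p. \<forall>i<\<kappa>. snd q b i = snd p b i)"

definition is_succ_of :: "'o::wellorder \<Rightarrow> 'o \<Rightarrow> bool" where
  "is_succ_of a b \<longleftrightarrow> a < b \<and> (\<forall>x. a < x \<longrightarrow> b \<le> x)"

text \<open>even ordinals: limit (or zero) plus an even natural number\<close>
inductive even_ord :: "'o::wellorder \<Rightarrow> bool" where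
  lim: "\<not> (\<exists>a. is_succ_of a b) \<Longrightarrow> even_ord b"
| ss: "is_succ_of c a \<Longrightarrow> is_succ_of a b \<Longrightarrow> even_ord c \<Longrightarrow> even_ord b"

definition restr :: "('o::wellorder \<Rightarrow> 'c) \<Rightarrow> 'o \<Rightarrow> 'o \<Rightarrow> 'c" where
  "restr p x = (\<lambda>z. if z < x then p z else undefined)"

text \<open>(len+1)-strategic closedness of (P, ext): Player II (even stages, including
  0 and limits) has a strategy, depending on the history and the stage, such that in
  every play following it and in which all earlier moves are legal, her move at each
  even stage xi \<le> len is legal.\<close>
definition strat_closed :: "'o::wellorder \<Rightarrow> 'c set \<Rightarrow> ('c \<Rightarrow> 'c \<Rightarrow> bool) \<Rightarrow> bool" where
  "strat_closed len P ext \<longleftrightarrow> (\<exists>\<sigma> :: ('o \<Rightarrow> 'c) \<Rightarrow> 'o \<Rightarrow> 'c.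
     \<forall>p \<xi>. \<xi> \<le> len \<and> even_ord \<xi> \<and>
        (\<forall>\<eta><\<xi>. p \<eta> \<in> P \<and> (\<forall>\<zeta><\<eta>. ext (p \<eta>) (p \<zeta>))) \<and>
        (\<forall>\<eta><\<xi>. even_ord \<eta> \<longrightarrow> p \<eta> = \<sigma> (restr p \<eta>) \<eta>)
      \<longrightarrow> \<sigma> (restr p \<xi>) \<xi> \<in> P \<and> (\<forall>\<eta><\<xi>. ext (\<sigma> (restr p \<xi>) \<xi>) (p \<eta>)))"

end

theory Submission
  imports Defs
begin


lemma card_less_not_lepoll:
  fixes a b :: "'o::wellorder"
  assumes "is_cardinal a" "b < a"
  shows "\<not> ({..<a} \<lesssim> {..<b})"
proof
  assume h: "{..<a} \<lesssim> {..<b}"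
  have "{..<b} \<lesssim> {..<a}" using assms(2) by (intro subset_imp_lepoll) auto
  then have "{..<b} \<approx> {..<a}" using h by (rule lepoll_antisym)
  then show False using assms unfolding is_cardinal_def by blast
qed

lemma card_limit:
  fixes a y :: "'o::wellorder"
  assumes "is_cardinal a" "infinite {..<a}" "y < a"
  shows "\<exists>x. y < x \<and> x < a"
proof (rule ccontr)
  assume "\<not> ?thesis"
  then have eq: "{..<a} = insert y {..<y}" using assms(3) by (auto simp: not_less) (metis leD le_less)
  then have "infinite {..<y}" using assms(2) by auto
  then have "insert y {..<y} \<approx> {..<y}" by (rule infinite_insert_eqpoll)
  then have "{..<a} \<lesssim> {..<y}" using eq by (simp add: eqpoll_imp_lepoll)
  then show False using card_less_not_lepoll assms by blast
qed

lemma insert_lepoll_inf: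
  assumes "A \<lesssim> L" "infinite L"
  shows "insert a A \<lesssim> L"
proof (cases "finite A")
  case True
  then show ?thesis using assms finite_lepoll_infinite by blast
next
  case False
  then have "insert a A \<lesssim> A" by (rule infinite_insert_lepoll)
  then show ?thesis using assms(1) lepoll_trans by blast
qed

lemma times_same_inf: "infinite L \<Longrightarrow> L \<times> L \<lesssim> L"
  using card_of_Times_same_infinite[of L] eqpoll_iff_card_of_ordIso eqpoll_imp_lepoll by blast

lemma UN_lepoll_inf:
  assumes "I \<lesssim> L" "\<And>x. x \<in> I \<Longrightarrow> B x \<lesssim> L" "infinite L"
  shows "(\<Union>x\<in>I. B x) \<lesssim> L"
proof -
  obtain h where h: "I \<subseteq> h ` L" using assms(1) lepoll_iff by metis
  have "\<forall>x\<in>I. \<exists>g. B x \<subseteq> g ` L" using assms(2) lepoll_iff by metis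
  then obtain g where g: "\<And>x. x \<in> I \<Longrightarrow> B x \<subseteq> g x ` L" by metis
  have "(\<Union>x\<in>I. B x) \<subseteq> (\<lambda>(a,b). g (h a) b) ` (L \<times> L)"
  proof
    fix z assume "z \<in> (\<Union>x\<in>I. B x)"
    then obtain x where x: "x \<in> I" "z \<in> B x" by auto
    then obtain a where a: "a \<in> L" "x = h a" using h by auto
    obtain b where "b \<in> L" "z = g x b" using g x by blast
    then show "z \<in> (\<lambda>(a,b). g (h a) b) ` (L \<times> L)" using a by (auto intro!: image_eqI[where x="(a,b)"])
  qed
  then have "(\<Union>x\<in>I. B x) \<lesssim> L \<times> L" by (rule subset_image_lepoll)
  then show ?thesis using times_same_inf[OF assms(3)] lepoll_trans by blast
qed

lemma strict_mono_ge:
  fixes e :: "'o::wellorder \<Rightarrow> 'o"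
  assumes "strict_mono_on {..t} e" "\<nu> \<le> t"
  shows "\<nu> \<le> e \<nu>"
  using assms(2)
proof (induction \<nu> rule: less_induct)
  case (less \<nu>)
  show ?case
  proof (rule ccontr)
    assume "\<not> \<nu> \<le> e \<nu>"
    then have lt: "e \<nu> < \<nu>" by simp
    then have "e (e \<nu>) < e \<nu>" using assms(1) less.prems by (auto simp: strict_mono_on_def)
    moreover have "e \<nu> \<le> e (e \<nu>)" using less.IH[OF lt] lt less.prems by simp
    ultimately show False by simp
  qed
qed

lemma order_type:
  fixes R :: "'o::wellorder set"
  assumes "R \<subseteq> {..<\<theta>}"
  shows "\<exists>g e. bij_betw e {..<g} R \<and> strict_mono_on {..<g} e \<and> g \<le> \<theta>"
proof -
  define H where "H = (\<lambda>(e::'o\<Rightarrow>'o) \<nu>. LEAST r. r \<in> R \<and> (\<forall>\<nu>'<\<nu>. e \<nu>' < r))"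
  define E where "E = wfrec {(x,y). x < (y::'o)} H"
  have Eeq: "E \<nu> = (LEAST r. r \<in> R \<and> (\<forall>\<nu>'<\<nu>. E \<nu>' < r))" for \<nu>
  proof -
    have "E \<nu> = H (cut E {(x,y). x < y} \<nu>) \<nu>"
      unfolding E_def by (rule wfrec[OF wf])
    also have "\<dots> = (LEAST r. r \<in> R \<and> (\<forall>\<nu>'<\<nu>. E \<nu>' < r))"
      unfolding H_def by (simp add: cut_apply)
    finally show ?thesis .
  qed
  define P where "P \<nu> = (\<exists>r\<in>R. \<forall>\<nu>'<\<nu>. E \<nu>' < r)" for \<nu>
  have PE: "E \<nu> \<in> R \<and> (\<forall>\<nu>'<\<nu>. E \<nu>' < E \<nu>)" if "P \<nu>" for \<nu>
    using that unfolding P_def Eeq[of \<nu>] by (rule bexE) (rule LeastI, blast)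
  have Pdown: "P \<nu>'" if "P \<nu>" "\<nu>' \<le> \<nu>" for \<nu> \<nu>'
    using that unfolding P_def by (meson order_less_le_trans)
  have notP: "\<not> P \<theta>"
  proof
    assume "P \<theta>"
    then have sm: "strict_mono_on {..\<theta>} E"
      using PE Pdown by (auto simp: strict_mono_on_def)
    have "\<theta> \<le> E \<theta>" using strict_mono_ge[OF sm] by simp
    moreover have "E \<theta> < \<theta>" using PE[OF \<open>P \<theta>\<close>] assms by auto
    ultimately show False by simp
  qed
  define g where "g = (LEAST \<nu>. \<not> P \<nu>)"
  have gP: "\<not> P g" unfolding g_def using notP by (rule LeastI)
  have gle: "g \<le> \<theta>" unfolding g_def using notP by (rule Least_le)
  have Pg: "P \<nu>" if "\<nu> < g" for \<nu> using that not_less_Least unfolding g_def by blast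
  have sm: "strict_mono_on {..<g} E" using PE Pg by (auto simp: strict_mono_on_def)
  have surj: "r \<in> E ` {..<g}" if r: "r \<in> R" for r
  proof (rule ccontr)
    assume nr: "r \<notin> E ` {..<g}"
    have "E \<nu> < r" if "\<nu> < g" for \<nu>
      using that
    proof (induction \<nu> rule: less_induct)
      case (less \<nu>)
      have "E \<nu> \<le> r" unfolding Eeq[of \<nu>]
        by (rule Least_le) (use r less in auto)
      moreover have "E \<nu> \<noteq> r" using nr less.prems by auto
      ultimately show ?case by simp
    qed
    then have "P g" unfolding P_def using r by blast
    then show False using gP by simp
  qed
  have "bij_betw E {..<g} R"
    unfolding bij_betw_def
    using strict_mono_on_imp_inj_on[OF sm] PE Pg surj by auto
  then show ?thesis using sm gle by blast
qed




lemma cof_ex: "\<exists>A. cofinal_in A b \<and> A \<approx> {..<cof b}"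
proof -
  have "\<exists>A. cofinal_in A b \<and> A \<approx> {..<b}"
    by (rule exI[of _ "{..<b}"]) (auto simp: cofinal_in_def)
  then show ?thesis unfolding cof_def by (rule LeastI)
qed

lemma cof_le: "cofinal_in A b \<Longrightarrow> A \<approx> {..<g} \<Longrightarrow> cof b \<le> g"
  unfolding cof_def by (rule Least_le) blast

lemma cof_card: "is_cardinal (cof b)"
  unfolding is_cardinal_def
proof (intro allI impI notI)
  fix g assume g: "g < cof b" "{..<g} \<approx> {..<cof b}"
  obtain A where A: "cofinal_in A b" "A \<approx> {..<cof b}" using cof_ex by blast
  have "A \<approx> {..<g}" using eqpoll_trans[OF A(2) eqpoll_sym[OF g(2)]] .
  then have "cof b \<le> g" using A(1) cof_le by blast
  then show False using g by simp
qed

lemma cof_lepoll: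
  fixes b :: "'a::wellorder"
  assumes "cofinal_in C b" "C \<lesssim> X"
  shows "{..<cof b} \<lesssim> X"
proof -
  have "C \<subseteq> {..<b}" using assms(1) by (simp add: cofinal_in_def)
  then have "\<exists>g e. bij_betw e {..<g} C \<and> strict_mono_on {..<g} e \<and> g \<le> b" by (rule order_type)
  then obtain g :: 'a and e where e: "bij_betw e {..<g} C" by blast
  then have gC: "{..<g} \<approx> C" unfolding eqpoll_def by blast
  then have "C \<approx> {..<g}" by (rule eqpoll_sym)
  then have "cof b \<le> g" using assms(1) cof_le by blast
  then have "{..<cof b} \<lesssim> {..<g}" by (intro subset_imp_lepoll) auto
  also have "{..<g} \<lesssim> C" by (rule eqpoll_imp_lepoll[OF gC])
  also have "C \<lesssim> X" by fact
  finally show ?thesis .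
qed

lemma cof_le_card:
  assumes "cofinal_in C b" "C \<lesssim> {..<k}"
  shows "\<not> k < cof b"
  using cof_lepoll[OF assms] card_less_not_lepoll[OF cof_card] by blast

lemma regular_bound:
  fixes L :: "'o::wellorder"
  assumes "regular_card L" "S \<subseteq> {..<L}" "\<not> ({..<L} \<lesssim> S)"
  shows "\<exists>x<L. \<forall>s\<in>S. s < x"
proof (rule ccontr)
  assume "\<not> ?thesis"
  then have "\<forall>x<L. \<exists>s\<in>S. x \<le> s" by (meson not_less)
  then have "cofinal_in S L" using assms(2) by (simp add: cofinal_in_def)
  then have "{..<cof L} \<lesssim> S" using cof_lepoll by blast
  then show False using assms(1,3) by (simp add: regular_card_def)
qed




lemma cofinal_otype:
  fixes b :: "'o::wellorder"
  assumes "cofinal_in A' b"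
  shows "\<exists>A\<subseteq>A'. cofinal_in A b \<and> has_otype A (cof b)"
proof -
  define \<theta> where "\<theta> = cof b"
  obtain B where B: "cofinal_in B b" "B \<approx> {..<\<theta>}" using cof_ex unfolding \<theta>_def by blast
  have "{..<\<theta>} \<approx> B" using B(2) by (rule eqpoll_sym)
  then obtain \<phi> where \<phi>: "bij_betw \<phi> {..<\<theta>} B" unfolding eqpoll_def by blast
  have "\<forall>y\<in>B. \<exists>c. c \<in> A' \<and> y \<le> c"
  proof
    fix y assume "y \<in> B"
    then have "y < b" using B(1) unfolding cofinal_in_def by blast
    then show "\<exists>c. c \<in> A' \<and> y \<le> c" using assms unfolding cofinal_in_def by blast
  qed
  then obtain c where c: "\<And>y. y \<in> B \<Longrightarrow> c y \<in> A' \<and> y \<le> c y"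
    using bchoice[of B "\<lambda>y c. c \<in> A' \<and> y \<le> c"] by blast
  define h where "h = (\<lambda>\<nu>. c (\<phi> \<nu>))"
  have hA: "h \<nu> \<in> A'" "\<phi> \<nu> \<le> h \<nu>" if "\<nu> < \<theta>" for \<nu>
    using c \<phi> that unfolding h_def bij_betw_def by auto
  define R where "R = {\<nu>. \<nu> < \<theta> \<and> (\<forall>\<nu>'<\<nu>. h \<nu>' < h \<nu>)}"
  have "R \<subseteq> {..<\<theta>}" unfolding R_def by auto
  then obtain g e where e: "bij_betw e {..<g} R" "strict_mono_on {..<g} e" "g \<le> \<theta>"
    using order_type by blast
  have hsm: "strict_mono_on R h" unfolding R_def strict_mono_on_def by auto
  define D where "D = h ` R"
  have bijD: "bij_betw (h \<circ> e) {..<g} D"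
    unfolding D_def
    by (rule bij_betw_trans[OF e(1)]) (rule inj_on_imp_bij_betw[OF strict_mono_on_imp_inj_on[OF hsm]])
  have smD: "strict_mono_on {..<g} (h \<circ> e)"
  proof (rule strict_mono_onI)
    fix r s assume rs: "r \<in> {..<g}" "s \<in> {..<g}" "r < s"
    then have "e r < e s" "e r \<in> R" "e s \<in> R"
      using e(1,2) unfolding strict_mono_on_def bij_betw_def by auto
    then show "(h \<circ> e) r < (h \<circ> e) s" using hsm unfolding strict_mono_on_def by auto
  qed
  have DA: "D \<subseteq> A'" unfolding D_def R_def using hA by auto
  have cofD: "cofinal_in D b"
    unfolding cofinal_in_def
  proof
    show "D \<subseteq> {..<b}" using DA assms by (auto simp: cofinal_in_def)
    show "\<forall>x<b. \<exists>a\<in>D. x \<le> a"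
    proof (intro allI impI)
      fix x assume "x < b"
      then obtain y where y: "y \<in> B" "x \<le> y" using B(1) by (auto simp: cofinal_in_def)
      then obtain \<nu>0 where \<nu>0: "\<nu>0 < \<theta>" "y = \<phi> \<nu>0" using \<phi> unfolding bij_betw_def by auto
      have ex: "\<nu>0 < \<theta> \<and> x \<le> h \<nu>0" using hA[OF \<nu>0(1)] y \<nu>0 by auto
      define \<nu> where "\<nu> = (LEAST \<nu>. \<nu> < \<theta> \<and> x \<le> h \<nu>)"
      have \<nu>: "\<nu> < \<theta> \<and> x \<le> h \<nu>" unfolding \<nu>_def using ex by (rule LeastI)
      have "\<nu> \<in> R"
        unfolding R_def
      proof (intro CollectI conjI allI impI)
        show "\<nu> < \<theta>" using \<nu> by simp
        fix \<nu>' assume "\<nu>' < \<nu>"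
        then have "\<not> (\<nu>' < \<theta> \<and> x \<le> h \<nu>')" unfolding \<nu>_def by (rule not_less_Least)
        then show "h \<nu>' < h \<nu>" using \<nu> \<open>\<nu>' < \<nu>\<close> by auto
      qed
      then show "\<exists>a\<in>D. x \<le> a" using \<nu> unfolding D_def by blast
    qed
  qed
  have "{..<g} \<approx> D" using bijD unfolding eqpoll_def by blast
  then have "D \<approx> {..<g}" by (rule eqpoll_sym)
  then have "\<theta> \<le> g" using cof_le cofD unfolding \<theta>_def by blast
  then have "g = \<theta>" using e(3) by simp
  then have "has_otype D (cof b)" unfolding has_otype_def \<theta>_def using bijD smD by blast
  then show ?thesis using DA cofD by blast
qed




definition osucc :: "'o::wellorder \<Rightarrow> 'o" where "osucc x = (LEAST y. x < y)"

lemma osucc: "x < y \<Longrightarrow> x < osucc x \<and> osucc x \<le> y"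
  unfolding osucc_def by (metis LeastI Least_le)

lemma is_succ_osucc: "x < y \<Longrightarrow> is_succ_of x (osucc x)"
  unfolding is_succ_of_def using osucc by blast

lemma is_succ_eq: "is_succ_of a b \<Longrightarrow> b = osucc a"
  unfolding is_succ_of_def using osucc by (metis antisym)

lemma is_succ_le: "is_succ_of a b \<Longrightarrow> x < b \<Longrightarrow> x \<le> a"
  unfolding is_succ_of_def using not_less by blast

lemma parity: "c < (y::'o::wellorder) \<Longrightarrow> even_ord c \<or> even_ord (osucc c)"
proof (induction c arbitrary: y rule: less_induct)
  case (less c)
  show ?case
  proof (cases "\<exists>a. is_succ_of a c")
    case False
    then show ?thesis by (blast intro: even_ord.lim)
  next
    case True
    then obtain d where d: "is_succ_of d c" by blast
    then have dc: "d < c" "c = osucc d" using is_succ_eq unfolding is_succ_of_def by auto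
    show ?thesis
    proof (cases "even_ord d")
      case True
      then have "even_ord (osucc c)" using d is_succ_osucc[OF less.prems] by (blast intro: even_ord.ss)
      then show ?thesis by blast
    next
      case False
      then show ?thesis using less.IH[OF dc(1) dc(1)] dc(2) by blast
    qed
  qed
qed

lemma succ_even_above:
  fixes \<xi> :: "'o::wellorder"
  assumes "\<not> (\<exists>a. is_succ_of a \<xi>)" "\<eta> < \<xi>"
  shows "\<exists>\<zeta>. \<eta> \<le> \<zeta> \<and> \<zeta> < \<xi> \<and> even_ord \<zeta> \<and> (\<exists>a. is_succ_of a \<zeta>)"
proof -
  have s1: "is_succ_of \<eta> (osucc \<eta>)" using is_succ_osucc[OF assms(2)] .
  have l1: "osucc \<eta> < \<xi>" using osucc[OF assms(2)] s1 assms(1) by (metis order_le_less)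
  have s2: "is_succ_of (osucc \<eta>) (osucc (osucc \<eta>))" using is_succ_osucc[OF l1] .
  have l2: "osucc (osucc \<eta>) < \<xi>" using osucc[OF l1] s2 assms(1) by (metis order_le_less)
  have e1: "\<eta> \<le> osucc \<eta>" "\<eta> \<le> osucc (osucc \<eta>)" using s1 s2 unfolding is_succ_of_def by auto
  show ?thesis
  proof (cases "even_ord \<eta>")
    case True
    then have "even_ord (osucc (osucc \<eta>))" using s1 s2 by (blast intro: even_ord.ss)
    then show ?thesis using l2 s2 e1 by blast
  next
    case False
    then have "even_ord (osucc \<eta>)" using parity[OF assms(2)] by blast
    then show ?thesis using l1 s1 e1 by blast
  qed
qed

definition lub :: "'o::wellorder set \<Rightarrow> 'o" where "lub X = (LEAST x. \<forall>v\<in>X. v < x)"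
definition bdd :: "'o::wellorder \<Rightarrow> 'o set \<Rightarrow> bool" where "bdd L X = (\<exists>x<L. \<forall>v\<in>X. v < x)"

lemma lub: "bdd L X \<Longrightarrow> lub X < L \<and> (\<forall>v\<in>X. v < lub X)"
  unfolding bdd_def lub_def
proof (elim exE conjE)
  fix x assume x: "x < L" "\<forall>v\<in>X. v < x"
  have "\<forall>v\<in>X. v < (LEAST x. \<forall>v\<in>X. v < x)" using x(2) by (rule LeastI)
  moreover have "(LEAST x. \<forall>v\<in>X. v < x) \<le> x" using x(2) by (rule Least_le)
  ultimately show "(LEAST x. \<forall>v\<in>X. v < x) < L \<and> (\<forall>v\<in>X. v < (LEAST x. \<forall>v\<in>X. v < x))"
    using x(1) by auto
qed

definition tops :: "('o::wellorder \<Rightarrow> 'o cond) \<Rightarrow> 'o \<Rightarrow> 'o \<Rightarrow> 'o set" where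
  "tops h \<xi> i = {snd (h \<eta>) (fst (h \<eta>)) i | \<eta>. \<eta> < \<xi>}"
definition dtops :: "('o::wellorder \<Rightarrow> 'o) \<Rightarrow> ('o \<Rightarrow> 'o cond) \<Rightarrow> 'o \<Rightarrow> 'o \<Rightarrow> 'o set" where
  "dtops hc h \<xi> i = {snd (h \<eta>) (fst (h \<eta>)) i | \<eta>. \<eta> < \<xi> \<and> \<eta> \<in> hc ` {..i}}"
definition fsucc :: "('o::wellorder \<Rightarrow> 'o) \<Rightarrow> ('o \<Rightarrow> 'o cond) \<Rightarrow> 'o \<Rightarrow> 'o \<Rightarrow> 'o \<Rightarrow> 'o" where
  "fsucc ls h \<xi> \<pi> i = (if bdd (ls i) (tops h \<xi> i) then lub (tops h \<xi> i) else osucc (snd (h \<pi>) (fst (h \<pi>)) i))"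
definition flim :: "('o::wellorder \<Rightarrow> 'o) \<Rightarrow> ('o \<Rightarrow> 'o) \<Rightarrow> ('o \<Rightarrow> 'o cond) \<Rightarrow> 'o \<Rightarrow> 'o \<Rightarrow> 'o" where
  "flim ls hc h \<xi> i = (if bdd (ls i) (tops h \<xi> i) then lub (tops h \<xi> i)
     else if bdd (ls i) (dtops hc h \<xi> i) then lub (dtops hc h \<xi> i) else lub {})"
definition limlen :: "('o::wellorder \<Rightarrow> 'o cond) \<Rightarrow> 'o \<Rightarrow> 'o" where
  "limlen h \<xi> = (LEAST x. \<forall>\<eta><\<xi>. fst (h \<eta>) < x)"
definition limseq :: "('o::wellorder \<Rightarrow> 'o cond) \<Rightarrow> 'o \<Rightarrow> 'o \<Rightarrow> 'o \<Rightarrow> 'o" where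
  "limseq h \<xi> b = snd (h (SOME \<eta>. \<eta> < \<xi> \<and> b \<le> fst (h \<eta>))) b"
definition strat :: "('o::wellorder \<Rightarrow> 'o) \<Rightarrow> ('o \<Rightarrow> 'o) \<Rightarrow> ('o \<Rightarrow> 'o cond) \<Rightarrow> 'o \<Rightarrow> 'o cond" where
  "strat ls hc h \<xi> = (if \<exists>a. is_succ_of a \<xi> then
      (let \<pi> = (SOME a. is_succ_of a \<xi>) in
        (osucc (fst (h \<pi>)), (snd (h \<pi>))(osucc (fst (h \<pi>)) := fsucc ls h \<xi> \<pi>)))
    else (limlen h \<xi>, \<lambda>b. if b < limlen h \<xi> then limseq h \<xi> b else flim ls hc h \<xi>))"

definition gprop :: "'o::wellorder \<Rightarrow> ('o \<Rightarrow> 'o) \<Rightarrow> ('o \<Rightarrow> 'o \<Rightarrow> 'o) \<Rightarrow> 'o \<Rightarrow> bool" where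
  "gprop \<kappa> ls F b = ((\<forall>i<\<kappa>. F b i < ls i) \<and> (\<forall>g<b. eventually_less \<kappa> (F g) (F b)) \<and>
     (\<kappa> < cof b \<longrightarrow> good_point \<kappa> F b))"

lemma G_set_iff: "(\<alpha>, F) \<in> G_set lam \<kappa> ls \<longleftrightarrow> {..<\<alpha>} \<lesssim> {..<lam} \<and> (\<forall>b\<le>\<alpha>. gprop \<kappa> ls F b)"
  unfolding G_set_def gprop_def by auto

lemma G_set_iff': "p \<in> G_set lam \<kappa> ls \<longleftrightarrow> {..<fst p} \<lesssim> {..<lam} \<and> (\<forall>b\<le>fst p. gprop \<kappa> ls (snd p) b)"
  using G_set_iff[of "fst p" "snd p"] by simp

lemma gprop_cong:
  fixes b :: "'o::wellorder"
  assumes "\<forall>g\<le>b. \<forall>i<\<kappa>. F g i = F' g i" "gprop \<kappa> ls F b"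
  shows "gprop \<kappa> ls F' b"
proof -
  have ev: "eventually_less \<kappa> (F' g) (F' b)" if "g < b" "eventually_less \<kappa> (F g) (F b)" for g
    using that assms(1) unfolding eventually_less_def by (metis order_less_imp_le order_refl)
  have gp: "good_point \<kappa> F' b" if gpF: "good_point \<kappa> F b"
  proof -
    obtain A and j :: 'o where A: "cofinal_in A b" "has_otype A (cof b)" "j < \<kappa>"
      "\<forall>i. j \<le> i \<and> i < \<kappa> \<longrightarrow> strict_mono_on A (\<lambda>g. F g i)"
      using gpF unfolding good_point_def by blast
    have "\<forall>i. j \<le> i \<and> i < \<kappa> \<longrightarrow> strict_mono_on A (\<lambda>g. F' g i)"
    proof (intro allI impI)
      fix i assume i: "j \<le> i \<and> i < \<kappa>"
      have "\<forall>g\<in>A. F' g i = F g i" using A(1) assms(1) i unfolding cofinal_in_def by force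
      then show "strict_mono_on A (\<lambda>g. F' g i)" using A(4) i
        unfolding strict_mono_on_def by simp
    qed
    then show ?thesis unfolding good_point_def using A by blast
  qed
  show ?thesis using assms ev gp unfolding gprop_def by simp
qed

lemma evl_tail:
  assumes "eventually_less \<kappa> f g" "j < \<kappa>" "\<forall>i. j \<le> i \<and> i < \<kappa> \<longrightarrow> g i < h i"
  shows "eventually_less \<kappa> f h"
proof -
  obtain j' where j': "j' < \<kappa>" "\<forall>i. j' \<le> i \<and> i < \<kappa> \<longrightarrow> f i < g i"
    using assms(1) unfolding eventually_less_def by blast
  show ?thesis unfolding eventually_less_def
    by (rule exI[of _ "max j j'"]) (use j' assms(2,3) in \<open>auto intro: less_trans\<close>)
qed

lemma ext_trans:
  assumes "G_ext \<kappa> r q" "G_ext \<kappa> q p" shows "G_ext \<kappa> r p"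
proof -
  have a: "fst p \<le> fst q" "fst q \<le> fst r" using assms unfolding G_ext_def by auto
  have "snd r b i = snd p b i" if "b \<le> fst p" "i < \<kappa>" for b i
  proof -
    have "snd r b i = snd q b i" using assms(1) that a unfolding G_ext_def by auto
    also have "\<dots> = snd p b i" using assms(2) that unfolding G_ext_def by auto
    finally show ?thesis .
  qed
  then show ?thesis using a unfolding G_ext_def by auto
qed




lemma restr_apply [simp]: "y < x \<Longrightarrow> restr p x y = p y"
  unfolding restr_def by simp

locale gs =
  fixes lam \<kappa> :: "'o::wellorder" and ls :: "'o \<Rightarrow> 'o" and hc :: "'o \<Rightarrow> 'o" and mu :: 'o
  assumes sing: "singular_card lam" and cofk: "cof lam = \<kappa>"
    and reg: "\<forall>i<\<kappa>. regular_card (ls i)"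
    and lsmono: "\<forall>i j. i < j \<and> j < \<kappa> \<longrightarrow> ls i < ls j"
    and lslt: "\<forall>i<\<kappa>. ls i < lam" and cofls: "\<forall>x<lam. \<exists>i<\<kappa>. x < ls i"
    and mu: "\<not> ({..<mu} \<lesssim> {..<lam})"
    and hc1: "\<forall>\<eta><lam. \<exists>i<\<kappa>. \<eta> \<le> hc i" and hc2: "\<forall>i<\<kappa>. hc i < lam"
begin

abbreviation "G \<equiv> G_set lam \<kappa> ls"

lemma inf_lam: "infinite {..<lam}" using sing by (simp add: singular_card_def)

lemma k_lt: "\<kappa> < lam" using sing cofk by (simp add: singular_card_def)

lemma len_mu: "{..<\<alpha>} \<lesssim> {..<lam} \<Longrightarrow> \<alpha> < mu"
proof (rule ccontr)
  assume a: "{..<\<alpha>} \<lesssim> {..<lam}" "\<not> \<alpha> < mu"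
  then have "{..<mu} \<lesssim> {..<\<alpha>}" by (intro subset_imp_lepoll) auto
  then have "{..<mu} \<lesssim> {..<lam}" using a(1) lepoll_trans by blast
  then show False using mu by simp
qed

lemma ls_card: "i < \<kappa> \<Longrightarrow> is_cardinal (ls i) \<and> infinite {..<ls i}"
  using reg by (simp add: regular_card_def)

lemma ls_lim: "i < \<kappa> \<Longrightarrow> y < ls i \<Longrightarrow> y < osucc y \<and> osucc y < ls i"
proof -
  assume i: "i < \<kappa>" "y < ls i"
  then obtain x where x: "y < x" "x < ls i" using card_limit ls_card by blast
  then show ?thesis using osucc[OF x(1)] by auto
qed

lemma lub_empty: "i < \<kappa> \<Longrightarrow> lub {} < ls i"
proof -
  assume i: "i < \<kappa>"
  then have "{..<ls i} \<noteq> {}" using ls_card by (metis finite.emptyI)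
  then have "bdd (ls i) {}" unfolding bdd_def by auto
  then show ?thesis using lub by blast
qed

lemma big_ls: "\<zeta> < lam \<Longrightarrow> \<exists>j<\<kappa>. \<forall>i. j \<le> i \<and> i < \<kappa> \<longrightarrow> \<not> ({..<ls i} \<lesssim> {..<\<zeta>})"
proof -
  assume "\<zeta> < lam"
  then obtain j where j: "j < \<kappa>" "\<zeta> < ls j" using cofls by blast
  have "\<not> ({..<ls i} \<lesssim> {..<\<zeta>})" if i: "j \<le> i" "i < \<kappa>" for i
  proof -
    have "ls j \<le> ls i" using lsmono i by (metis order_le_less)
    then have "\<zeta> < ls i" using j by simp
    then show ?thesis using card_less_not_lepoll ls_card i(2) by blast
  qed
  then show ?thesis using j by blast
qed

lemma top_lt: "q \<in> G \<Longrightarrow> i < \<kappa> \<Longrightarrow> snd q (fst q) i < ls i"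
  unfolding G_set_iff' gprop_def by auto

lemma bdd_tops:
  assumes i: "i < \<kappa>" "\<not> ({..<ls i} \<lesssim> {..<\<zeta>})" and hG: "\<forall>\<eta><\<zeta>. h \<eta> \<in> G"
  shows "bdd (ls i) (tops h \<zeta> i)"
proof -
  have img: "tops h \<zeta> i = (\<lambda>\<eta>. snd (h \<eta>) (fst (h \<eta>)) i) ` {..<\<zeta>}"
    unfolding tops_def by auto
  have sub: "tops h \<zeta> i \<subseteq> {..<ls i}" unfolding img using hG top_lt i(1) by auto
  have "tops h \<zeta> i \<lesssim> {..<\<zeta>}" unfolding img by (rule image_lepoll)
  then have "\<not> ({..<ls i} \<lesssim> tops h \<zeta> i)" using i(2) lepoll_trans by blast
  then show ?thesis unfolding bdd_def using regular_bound reg i(1) sub by blast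
qed

lemma bdd_dtops:
  assumes i: "i < \<kappa>" "\<not> ({..<ls i} \<lesssim> {..<\<kappa>})" and hG: "\<forall>\<eta><\<zeta>. h \<eta> \<in> G"
  shows "bdd (ls i) (dtops hc h \<zeta> i)"
proof -
  have sub: "dtops hc h \<zeta> i \<subseteq> {..<ls i}" unfolding dtops_def using hG top_lt i(1) by auto
  have "dtops hc h \<zeta> i \<subseteq> (\<lambda>\<eta>. snd (h \<eta>) (fst (h \<eta>)) i) ` (hc ` {..i})"
    unfolding dtops_def by auto
  then have "dtops hc h \<zeta> i \<lesssim> hc ` {..i}" by (rule subset_image_lepoll)
  also have "hc ` {..i} \<lesssim> {..i}" by (rule image_lepoll)
  also have "{..i} \<lesssim> {..<\<kappa>}" using i(1) by (intro subset_imp_lepoll) auto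
  finally have "\<not> ({..<ls i} \<lesssim> dtops hc h \<zeta> i)" using i(2) lepoll_trans by blast
  then show ?thesis unfolding bdd_def using regular_bound reg i(1) sub by blast
qed

end




context gs
begin

lemma succ_case:
  fixes p :: "'o \<Rightarrow> 'o cond" and \<xi> :: 'o
  assumes prev: "\<forall>\<eta><\<xi>. p \<eta> \<in> G \<and> (\<forall>\<zeta><\<eta>. G_ext \<kappa> (p \<eta>) (p \<zeta>))"
    and sc: "\<exists>a. is_succ_of a \<xi>"
  shows "strat ls hc (restr p \<xi>) \<xi> \<in> G \<and> (\<forall>\<eta><\<xi>. G_ext \<kappa> (strat ls hc (restr p \<xi>) \<xi>) (p \<eta>))"
proof -
  define h where "h = restr p \<xi>"
  define \<pi> where "\<pi> = (SOME a. is_succ_of a \<xi>)"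
  have pi: "is_succ_of \<pi> \<xi>" using sc someI_ex unfolding \<pi>_def by metis
  have pix: "\<pi> < \<xi>" using pi is_succ_of_def by auto
  have hpi: "h \<pi> = p \<pi>" using pix h_def by simp
  define \<alpha> where "\<alpha> = fst (p \<pi>)"
  define F where "F = snd (p \<pi>)"
  define f where "f = fsucc ls h \<xi> \<pi>"
  define F' where "F' = F(osucc \<alpha> := f)"
  have st: "strat ls hc h \<xi> = (osucc \<alpha>, F')"
    unfolding strat_def using sc by (simp add: Let_def \<pi>_def[symmetric] hpi \<alpha>_def F_def f_def F'_def)
  have pG: "p \<pi> \<in> G" using prev pix by blast
  have "p \<pi> = (\<alpha>, F)" by (simp add: \<alpha>_def F_def)
  then have aG: "{..<\<alpha>} \<lesssim> {..<lam}" "\<forall>b\<le>\<alpha>. gprop \<kappa> ls F b"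
    using pG by (auto simp: G_set_iff)
  have amu: "\<alpha> < mu" using len_mu aG(1) .
  have as: "\<alpha> < osucc \<alpha>" using osucc[OF amu] by simp
  have le_as: "b \<le> \<alpha>" if "b < osucc \<alpha>" for b using is_succ_le[OF is_succ_osucc[OF amu] that] .
  have F'b: "F' b = F b" if "b \<le> \<alpha>" for b using as that by (auto simp: F'_def)
  have F'a: "F' (osucc \<alpha>) = f" by (simp add: F'_def)
  obtain i0 where i0: "i0 < \<kappa>" "\<kappa> < ls i0" using cofls k_lt by blast
  have fbig: "F \<alpha> i < f i \<and> f i < ls i" if i: "i < \<kappa>" for i
  proof -
    have Fa: "F \<alpha> i < ls i" using aG(2) i unfolding gprop_def by auto
    have mem: "F \<alpha> i \<in> tops h \<xi> i" unfolding tops_def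
      by (rule CollectI, rule exI[of _ \<pi>]) (simp add: pix hpi \<alpha>_def F_def)
    show ?thesis
    proof (cases "bdd (ls i) (tops h \<xi> i)")
      case True then show ?thesis using lub[OF True] mem by (auto simp: f_def fsucc_def)
    next
      case False
      have "f i = osucc (F \<alpha> i)" using False by (simp add: f_def fsucc_def hpi \<alpha>_def F_def)
      then show ?thesis using ls_lim[OF i Fa] by simp
    qed
  qed
  have gnew: "gprop \<kappa> ls F' (osucc \<alpha>)"
    unfolding gprop_def
  proof (intro conjI allI impI)
    fix i assume "i < \<kappa>" then show "F' (osucc \<alpha>) i < ls i" using fbig F'a by simp
  next
    fix g assume g: "g < osucc \<alpha>"
    then have g': "g \<le> \<alpha>" by (rule le_as)
    have tail: "\<forall>i. i0 \<le> i \<and> i < \<kappa> \<longrightarrow> F \<alpha> i < F' (osucc \<alpha>) i" using fbig F'a by simp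
    show "eventually_less \<kappa> (F' g) (F' (osucc \<alpha>))"
    proof (cases "g = \<alpha>")
      case True
      then show ?thesis unfolding eventually_less_def using tail i0 F'b by auto
    next
      case False
      then have "g < \<alpha>" using g' by simp
      then have "eventually_less \<kappa> (F g) (F \<alpha>)" using aG(2) unfolding gprop_def by auto
      then show ?thesis using evl_tail[OF _ i0(1) tail] F'b g' by simp
    qed
  next
    assume kc: "\<kappa> < cof (osucc \<alpha>)"
    have "cofinal_in {\<alpha>} (osucc \<alpha>)" unfolding cofinal_in_def using as le_as by auto
    moreover have "{\<alpha>} \<lesssim> {..<\<kappa>}" unfolding lepoll_iff
      by (rule exI[of _ "\<lambda>_. \<alpha>"]) (use i0 in auto)
    ultimately have "\<not> \<kappa> < cof (osucc \<alpha>)" by (rule cof_le_card)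
    then show "good_point \<kappa> F' (osucc \<alpha>)" using kc by simp
  qed
  have ivl: "{..<osucc \<alpha>} = insert \<alpha> {..<\<alpha>}" using as le_as by (auto simp: order_le_less)
  have inG: "(osucc \<alpha>, F') \<in> G"
    unfolding G_set_iff
  proof (intro conjI allI impI)
    show "{..<osucc \<alpha>} \<lesssim> {..<lam}" unfolding ivl using insert_lepoll_inf[OF aG(1) inf_lam] .
    fix b assume b: "b \<le> osucc \<alpha>"
    show "gprop \<kappa> ls F' b"
    proof (cases "b = osucc \<alpha>")
      case True then show ?thesis using gnew by simp
    next
      case False
      then have "b \<le> \<alpha>" using b le_as by simp
      then show ?thesis using aG(2) F'b by (intro gprop_cong[of b \<kappa> F F']) auto
    qed
  qed
  have extpi: "G_ext \<kappa> (osucc \<alpha>, F') (p \<pi>)"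
    unfolding G_ext_def using as F'b by (simp add: \<alpha>_def[symmetric] F_def[symmetric])
  have "G_ext \<kappa> (osucc \<alpha>, F') (p \<eta>)" if "\<eta> < \<xi>" for \<eta>
  proof -
    have "\<eta> \<le> \<pi>" using is_succ_le[OF pi that] .
    then show ?thesis
    proof (cases "\<eta> = \<pi>")
      case True then show ?thesis using extpi by simp
    next
      case False
      then have "\<eta> < \<pi>" using \<open>\<eta> \<le> \<pi>\<close> by simp
      then have "G_ext \<kappa> (p \<pi>) (p \<eta>)" using prev pix by blast
      then show ?thesis using ext_trans extpi by blast
    qed
  qed
  then show ?thesis using inG st unfolding h_def by simp
qed

end




context gs
begin

lemma lim_case:
  fixes p :: "'o \<Rightarrow> 'o cond" and \<xi> :: 'o
  assumes xle: "\<xi> \<le> lam"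
    and prev: "\<forall>\<eta><\<xi>. p \<eta> \<in> G \<and> (\<forall>\<zeta><\<eta>. G_ext \<kappa> (p \<eta>) (p \<zeta>))"
    and follow: "\<forall>\<eta><\<xi>. even_ord \<eta> \<longrightarrow> p \<eta> = strat ls hc (restr p \<eta>) \<eta>"
    and nsc: "\<not> (\<exists>a. is_succ_of a \<xi>)"
  shows "strat ls hc (restr p \<xi>) \<xi> \<in> G \<and> (\<forall>\<eta><\<xi>. G_ext \<kappa> (strat ls hc (restr p \<xi>) \<xi>) (p \<eta>))"
proof -
  define h where "h = restr p \<xi>"
  have hp: "h \<eta> = p \<eta>" if "\<eta> < \<xi>" for \<eta> using that h_def by simp
  have pG: "p \<eta> \<in> G" if "\<eta> < \<xi>" for \<eta> using prev that by blast
  have hG: "\<forall>\<eta><\<xi>. h \<eta> \<in> G" using pG hp by simp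
  have lenG: "{..<fst (p \<eta>)} \<lesssim> {..<lam}" if "\<eta> < \<xi>" for \<eta>
    using pG[OF that] unfolding G_set_iff' by blast
  define \<alpha> where "\<alpha> = limlen h \<xi>"
  have mub: "\<forall>\<eta><\<xi>. fst (h \<eta>) < mu" using lenG len_mu hp by simp
  have alpha_gt: "fst (p \<eta>) < \<alpha>" if "\<eta> < \<xi>" for \<eta>
  proof -
    have "\<forall>\<eta><\<xi>. fst (h \<eta>) < \<alpha>" unfolding \<alpha>_def limlen_def using mub by (rule LeastI)
    then show ?thesis using that hp by simp
  qed
  have alpha_cof: "\<exists>\<eta><\<xi>. \<gamma> \<le> fst (p \<eta>)" if "\<gamma> < \<alpha>" for \<gamma>
  proof -
    have "\<not> (\<forall>\<eta><\<xi>. fst (h \<eta>) < \<gamma>)" using that unfolding \<alpha>_def limlen_def by (rule not_less_Least)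
    then show ?thesis using hp by (auto simp: not_less)
  qed
  have mono_len: "fst (p \<eta>) \<le> fst (p \<eta>')" if "\<eta> \<le> \<eta>'" "\<eta>' < \<xi>" for \<eta> \<eta>'
  proof (cases "\<eta> = \<eta>'")
    case False
    then have "\<eta> < \<eta>'" using that by simp
    then show ?thesis using prev that unfolding G_ext_def by blast
  qed simp
  have agree: "snd (p \<eta>) b i = snd (p \<eta>') b i"
    if "\<eta> < \<xi>" "\<eta>' < \<xi>" "b \<le> fst (p \<eta>)" "b \<le> fst (p \<eta>')" "i < \<kappa>" for \<eta> \<eta>' b i
  proof (cases \<eta> \<eta>' rule: linorder_cases)
    case less
    then have "G_ext \<kappa> (p \<eta>') (p \<eta>)" using prev that by blast
    then show ?thesis using that unfolding G_ext_def by simp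
  next
    case greater
    then have "G_ext \<kappa> (p \<eta>) (p \<eta>')" using prev that by blast
    then show ?thesis using that unfolding G_ext_def by simp
  qed simp
  define f where "f = flim ls hc h \<xi>"
  define F' where "F' = (\<lambda>b. if b < \<alpha> then limseq h \<xi> b else f)"
  have st: "strat ls hc h \<xi> = (\<alpha>, F')"
    unfolding strat_def F'_def f_def \<alpha>_def using nsc by simp
  have F'a: "F' \<alpha> = f" by (simp add: F'_def)
  have coh: "F' b i = snd (p \<eta>) b i" if "\<eta> < \<xi>" "b \<le> fst (p \<eta>)" "i < \<kappa>" for \<eta> b i
  proof -
    have blt: "b < \<alpha>" using alpha_gt[OF that(1)] that(2) by simp
    define \<eta>b where "\<eta>b = (SOME \<eta>. \<eta> < \<xi> \<and> b \<le> fst (h \<eta>))"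
    have "\<eta> < \<xi> \<and> b \<le> fst (h \<eta>)" using that hp by simp
    then have eb: "\<eta>b < \<xi> \<and> b \<le> fst (h \<eta>b)" unfolding \<eta>b_def by (rule someI)
    have "F' b = snd (p \<eta>b) b" using blt eb hp unfolding F'_def limseq_def \<eta>b_def[symmetric] by simp
    moreover have "b \<le> fst (p \<eta>b)" using eb hp[of \<eta>b] by simp
    ultimately show ?thesis using agree[of \<eta>b \<eta> b i] eb that by simp
  qed
  have gold: "gprop \<kappa> ls F' b" if bl: "b < \<alpha>" for b
  proof -
    obtain \<eta> where \<eta>: "\<eta> < \<xi>" "b \<le> fst (p \<eta>)" using alpha_cof[OF bl] by blast
    have "gprop \<kappa> ls (snd (p \<eta>)) b" using pG[OF \<eta>(1)] \<eta>(2) unfolding G_set_iff' by blast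
    then show ?thesis using coh \<eta> by (intro gprop_cong[of b \<kappa> "snd (p \<eta>)" F']) auto
  qed
  have fls: "f i < ls i" if "i < \<kappa>" for i
    unfolding f_def flim_def using lub lub_empty[OF that] by auto
  have key: "\<exists>a'. a' < \<alpha> \<and> fst (p \<eta>) \<le> a' \<and> (\<exists>j<\<kappa>. \<forall>i. j \<le> i \<and> i < \<kappa> \<longrightarrow> F' a' i < f i)"
    if \<eta>: "\<eta> < \<xi>" for \<eta>
  proof (cases "\<xi> < lam")
    case True
    obtain j where j: "j < \<kappa>" "\<forall>i. j \<le> i \<and> i < \<kappa> \<longrightarrow> \<not> ({..<ls i} \<lesssim> {..<\<xi>})"
      using big_ls[OF True] by blast
    have "F' (fst (p \<eta>)) i < f i" if i: "j \<le> i" "i < \<kappa>" for i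
    proof -
      have b: "bdd (ls i) (tops h \<xi> i)" using bdd_tops[OF i(2) _ hG] j i by blast
      have mem: "snd (p \<eta>) (fst (p \<eta>)) i \<in> tops h \<xi> i" unfolding tops_def
        by (rule CollectI, rule exI[of _ \<eta>]) (simp add: \<eta> hp)
      have "f i = lub (tops h \<xi> i)" using b by (simp add: f_def flim_def)
      then show ?thesis using lub[OF b] mem coh[OF \<eta> order_refl i(2)] by simp
    qed
    then show ?thesis using alpha_gt[OF \<eta>] j(1) by blast
  next
    case False
    then have xl: "\<xi> = lam" using xle by simp
    obtain i1 where i1: "i1 < \<kappa>" "\<eta> \<le> hc i1" using hc1 \<eta> xl by blast
    define \<eta>' where "\<eta>' = hc i1"
    have \<eta>': "\<eta>' < \<xi>" using hc2 i1 xl \<eta>'_def by simp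
    obtain i0 where i0: "i0 < \<kappa>" "\<forall>i. i0 \<le> i \<and> i < \<kappa> \<longrightarrow> \<not> ({..<ls i} \<lesssim> {..<\<kappa>})"
      using big_ls[OF k_lt] by blast
    have "F' (fst (p \<eta>')) i < f i" if i: "max i0 i1 \<le> i" "i < \<kappa>" for i
    proof -
      have b: "bdd (ls i) (dtops hc h \<xi> i)" using bdd_dtops[OF i(2) _ hG] i0 i by simp
      have mem: "snd (p \<eta>') (fst (p \<eta>')) i \<in> dtops hc h \<xi> i" unfolding dtops_def
        by (rule CollectI, rule exI[of _ \<eta>']) (use \<eta>' hp i \<eta>'_def in auto)
      have mem2: "snd (p \<eta>') (fst (p \<eta>')) i \<in> tops h \<xi> i" unfolding tops_def
        by (rule CollectI, rule exI[of _ \<eta>']) (simp add: \<eta>' hp)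
      have "snd (p \<eta>') (fst (p \<eta>')) i < f i"
      proof (cases "bdd (ls i) (tops h \<xi> i)")
        case True
        then show ?thesis using lub[OF True] mem2 by (simp add: f_def flim_def)
      next
        case False
        then show ?thesis using lub[OF b] mem b by (simp add: f_def flim_def)
      qed
      then show ?thesis using coh[OF \<eta>' order_refl i(2)] by simp
    qed
    moreover have "max i0 i1 < \<kappa>" using i0 i1 by simp
    moreover have "fst (p \<eta>) \<le> fst (p \<eta>')" using mono_len i1 \<eta>' \<eta>'_def by simp
    ultimately show ?thesis using alpha_gt[OF \<eta>'] by blast
  qed
  have evl_new: "eventually_less \<kappa> (F' g) f" if g: "g < \<alpha>" for g
  proof -
    obtain \<eta> where \<eta>: "\<eta> < \<xi>" "g \<le> fst (p \<eta>)" using alpha_cof[OF g] by blast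
    obtain a' j where a': "a' < \<alpha>" "fst (p \<eta>) \<le> a'" "j < \<kappa>"
      "\<forall>i. j \<le> i \<and> i < \<kappa> \<longrightarrow> F' a' i < f i" using key[OF \<eta>(1)] by blast
    show ?thesis
    proof (cases "g = a'")
      case True then show ?thesis unfolding eventually_less_def using a' by blast
    next
      case False
      then have "g < a'" using \<eta>(2) a'(2) by simp
      then have "eventually_less \<kappa> (F' g) (F' a')" using gold[OF a'(1)] unfolding gprop_def by blast
      then show ?thesis using evl_tail a'(3,4) by blast
    qed
  qed
  have good: "good_point \<kappa> F' \<alpha>" if kc: "\<kappa> < cof \<alpha>"
  proof (cases "\<xi> < lam")
    case False
    then have xl: "\<xi> = lam" using xle by simp
    define C where "C = (\<lambda>i. fst (p (hc i))) ` {..<\<kappa>}"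
    have "cofinal_in C \<alpha>" unfolding cofinal_in_def
    proof (intro conjI allI impI)
      show "C \<subseteq> {..<\<alpha>}" unfolding C_def using alpha_gt hc2 xl by auto
      fix x assume "x < \<alpha>"
      then obtain \<eta> where \<eta>: "\<eta> < \<xi>" "x \<le> fst (p \<eta>)" using alpha_cof by blast
      then obtain i1 where i1: "i1 < \<kappa>" "\<eta> \<le> hc i1" using hc1 xl by blast
      have "fst (p \<eta>) \<le> fst (p (hc i1))" using mono_len i1 hc2 xl by simp
      then show "\<exists>a\<in>C. x \<le> a" unfolding C_def using i1 \<eta> by force
    qed
    moreover have "C \<lesssim> {..<\<kappa>}" unfolding C_def by (rule image_lepoll)
    ultimately have "\<not> \<kappa> < cof \<alpha>" by (rule cof_le_card)
    then show ?thesis using kc by simp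
  next
    case True
    define A' where "A' = {fst (p \<zeta>) | \<zeta>. \<zeta> < \<xi> \<and> even_ord \<zeta> \<and> (\<exists>a. is_succ_of a \<zeta>)}"
    have cofA: "cofinal_in A' \<alpha>" unfolding cofinal_in_def
    proof (intro conjI allI impI)
      show "A' \<subseteq> {..<\<alpha>}" unfolding A'_def using alpha_gt by auto
      fix x assume "x < \<alpha>"
      then obtain \<eta> where \<eta>: "\<eta> < \<xi>" "x \<le> fst (p \<eta>)" using alpha_cof by blast
      obtain \<zeta> where \<zeta>: "\<eta> \<le> \<zeta>" "\<zeta> < \<xi>" "even_ord \<zeta>" "\<exists>a. is_succ_of a \<zeta>"
        using succ_even_above[OF nsc \<eta>(1)] by blast
      have "x \<le> fst (p \<zeta>)" using mono_len[OF \<zeta>(1,2)] \<eta>(2) by simp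
      then show "\<exists>a\<in>A'. x \<le> a" unfolding A'_def using \<zeta> by blast
    qed
    obtain A where A: "A \<subseteq> A'" "cofinal_in A \<alpha>" "has_otype A (cof \<alpha>)"
      using cofinal_otype[OF cofA] by blast
    obtain j where j: "j < \<kappa>" "\<forall>i. j \<le> i \<and> i < \<kappa> \<longrightarrow> \<not> ({..<ls i} \<lesssim> {..<\<xi>})"
      using big_ls[OF True] by blast
    have sm: "strict_mono_on A' (\<lambda>g. F' g i)" if i: "j \<le> i" "i < \<kappa>" for i
    proof (rule strict_mono_onI)
      fix r s assume rs: "r \<in> A'" "s \<in> A'" "r < s"
      obtain \<zeta> where \<zeta>: "r = fst (p \<zeta>)" "\<zeta> < \<xi>" using rs(1) unfolding A'_def by blast
      obtain \<zeta>' where \<zeta>': "s = fst (p \<zeta>')" "\<zeta>' < \<xi>" "even_ord \<zeta>'" "\<exists>a. is_succ_of a \<zeta>'"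
        using rs(2) unfolding A'_def by blast
      have zz: "\<zeta> < \<zeta>'"
      proof (rule ccontr)
        assume "\<not> \<zeta> < \<zeta>'"
        then have "s \<le> r" using mono_len[of \<zeta>' \<zeta>] \<zeta> \<zeta>' by simp
        then show False using rs(3) by simp
      qed
      define \<pi>' where "\<pi>' = (SOME a. is_succ_of a \<zeta>')"
      have pi': "is_succ_of \<pi>' \<zeta>'" using \<zeta>'(4) someI_ex unfolding \<pi>'_def by metis
      have pz: "\<pi>' < \<zeta>'" using pi' is_succ_of_def by auto
      have pst: "p \<zeta>' = strat ls hc (restr p \<zeta>') \<zeta>'" using follow \<zeta>' by blast
      also have "\<dots> = (osucc (fst (p \<pi>')), (snd (p \<pi>'))(osucc (fst (p \<pi>')) := fsucc ls (restr p \<zeta>') \<zeta>' \<pi>'))"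
        unfolding strat_def using \<zeta>'(4) pz by (simp add: Let_def \<pi>'_def[symmetric])
      finally have pz': "snd (p \<zeta>') s = fsucc ls (restr p \<zeta>') \<zeta>' \<pi>'" using \<zeta>'(1) by simp
      have Fs: "F' s i = fsucc ls (restr p \<zeta>') \<zeta>' \<pi>' i" using coh[OF \<zeta>'(2) _ i(2)] \<zeta>'(1) pz' by simp
      have nl: "\<not> ({..<ls i} \<lesssim> {..<\<zeta>'})"
      proof
        assume "{..<ls i} \<lesssim> {..<\<zeta>'}"
        moreover have "{..<\<zeta>'} \<lesssim> {..<\<xi>}" using \<zeta>'(2) by (intro subset_imp_lepoll) auto
        ultimately have "{..<ls i} \<lesssim> {..<\<xi>}" by (rule lepoll_trans)
        then show False using j i by blast
      qed
      have rG: "\<forall>\<eta><\<zeta>'. restr p \<zeta>' \<eta> \<in> G" using pG \<zeta>'(2) by simp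
      have b: "bdd (ls i) (tops (restr p \<zeta>') \<zeta>' i)" by (rule bdd_tops[OF i(2) nl rG])
      have mem: "snd (p \<zeta>) r i \<in> tops (restr p \<zeta>') \<zeta>' i" unfolding tops_def
        by (rule CollectI, rule exI[of _ \<zeta>]) (simp add: zz \<zeta>(1))
      have "F' r i = snd (p \<zeta>) r i" using coh[OF \<zeta>(2) _ i(2)] \<zeta>(1) by simp
      then show "F' r i < F' s i" using Fs lub[OF b] mem by (simp add: fsucc_def b)
    qed
    have "\<forall>i. j \<le> i \<and> i < \<kappa> \<longrightarrow> strict_mono_on A (\<lambda>g. F' g i)"
      using sm A(1) unfolding strict_mono_on_def by blast
    then show ?thesis unfolding good_point_def using A(2,3) j(1) by blast
  qed
  have lenA: "{..<\<alpha>} \<lesssim> {..<lam}"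
  proof -
    have "{..<\<alpha>} \<subseteq> (\<Union>\<eta>\<in>{..<\<xi>}. insert (fst (p \<eta>)) {..<fst (p \<eta>)})"
      using alpha_cof by (force simp: order_le_less)
    moreover have "(\<Union>\<eta>\<in>{..<\<xi>}. insert (fst (p \<eta>)) {..<fst (p \<eta>)}) \<lesssim> {..<lam}"
    proof (rule UN_lepoll_inf)
      show "{..<\<xi>} \<lesssim> {..<lam}" using xle by (intro subset_imp_lepoll) auto
      show "infinite {..<lam}" by (rule inf_lam)
      fix \<eta> assume "\<eta> \<in> {..<\<xi>}"
      then show "insert (fst (p \<eta>)) {..<fst (p \<eta>)} \<lesssim> {..<lam}"
        using insert_lepoll_inf[OF lenG inf_lam] by simp
    qed
    ultimately show ?thesis using subset_imp_lepoll lepoll_trans by blast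
  qed
  have inG: "(\<alpha>, F') \<in> G"
    unfolding G_set_iff
  proof (intro conjI allI impI)
    show "{..<\<alpha>} \<lesssim> {..<lam}" by (rule lenA)
    fix b assume b: "b \<le> \<alpha>"
    show "gprop \<kappa> ls F' b"
    proof (cases "b = \<alpha>")
      case False then show ?thesis using gold b by simp
    next
      case True
      then show ?thesis unfolding gprop_def using F'a fls evl_new good by simp
    qed
  qed
  have "G_ext \<kappa> (\<alpha>, F') (p \<eta>)" if "\<eta> < \<xi>" for \<eta>
    unfolding G_ext_def using alpha_gt[OF that] coh[OF that] by simp
  then show ?thesis using inG st unfolding h_def by simp
qed

end



theorem proposition2p10:
  fixes lam \<kappa> :: "'o::wellorder" and ls :: "'o \<Rightarrow> 'o"
  assumes "singular_card lam"
    and "cof lam = \<kappa>"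
    and "\<forall>i<\<kappa>. regular_card (ls i)"
    and "\<forall>i j. i < j \<and> j < \<kappa> \<longrightarrow> ls i < ls j"
    and "\<forall>i<\<kappa>. ls i < lam"
    and "\<forall>x<lam. \<exists>i<\<kappa>. x < ls i"
    and "\<exists>\<mu>::'o. \<not> ({..<\<mu>} \<lesssim> {..<lam})"
  shows "strat_closed lam (G_set lam \<kappa> ls) (G_ext \<kappa>)"
proof -
  obtain mu :: 'o where mu: "\<not> ({..<mu} \<lesssim> {..<lam})" using assms(7) by blast
  obtain A where A: "cofinal_in A lam" "A \<approx> {..<cof lam}" using cof_ex by blast
  have "{..<\<kappa>} \<approx> A" using A(2) assms(2) by (simp add: eqpoll_sym)
  then obtain hc where hc: "bij_betw hc {..<\<kappa>} A" unfolding eqpoll_def by blast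
  have hc1: "\<forall>\<eta><lam. \<exists>i<\<kappa>. \<eta> \<le> hc i"
  proof (intro allI impI)
    fix \<eta> assume "\<eta> < lam"
    then obtain a where a: "a \<in> A" "\<eta> \<le> a" using A(1) unfolding cofinal_in_def by blast
    then obtain i where "i < \<kappa>" "a = hc i" using hc unfolding bij_betw_def by auto
    then show "\<exists>i<\<kappa>. \<eta> \<le> hc i" using a by blast
  qed
  have hc2: "\<forall>i<\<kappa>. hc i < lam" using hc A(1) unfolding bij_betw_def cofinal_in_def by auto
  interpret gs lam \<kappa> ls hc mu
    using assms(1-6) mu hc1 hc2 by unfold_locales auto
  show ?thesis
    unfolding strat_closed_def
  proof (intro exI[of _ "strat ls hc"] allI impI, elim conjE)
    fix p \<xi>
    assume h: "\<xi> \<le> lam" "even_ord \<xi>"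
      "\<forall>\<eta><\<xi>. p \<eta> \<in> G \<and> (\<forall>\<zeta><\<eta>. G_ext \<kappa> (p \<eta>) (p \<zeta>))"
      "\<forall>\<eta><\<xi>. even_ord \<eta> \<longrightarrow> p \<eta> = strat ls hc (restr p \<eta>) \<eta>"
    show "strat ls hc (restr p \<xi>) \<xi> \<in> G \<and> (\<forall>\<eta><\<xi>. G_ext \<kappa> (strat ls hc (restr p \<xi>) \<xi>) (p \<eta>))"
    proof (cases "\<exists>a. is_succ_of a \<xi>")
      case True then show ?thesis using succ_case h(3) by blast
    next
      case False then show ?thesis using lim_case h(1,3,4) by blast
    qed
  qed
qed

end
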